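(* Let $G$ be a $\gamma_t$-critical graph of order $n$ with $\gamma_t(G)=n-\Delta(G)$ and $\delta(G)\ge 2$. Then $G$ is connected.
   Context: All graphs are finite and simple; $\Delta(G)$, $\delta(G)$ are maximum and minimum degree. A set $S\subseteq V(G)$ is a total dominating set if every vertex of $G$ is adjacent to some vertex of $S$; $\gamma_t(G)$ is the minimum size of such a set. A leaf is a vertex of degree one. A graph $G$ with no isolated vertex is $\gamma_t$-critical if for every vertex $v$ not adjacent to a leaf, $\gamma_t(G-v)<\gamma_t(G)$. *)

theory Defs
  imports Main
begin

definition simple_graph :: "'a set \<Rightarrow> ('a \<Rightarrow> 'a \<Rightarrow> bool) \<Rightarrow> bool" where
  "simple_graph V E \<longleftrightarrow> finite V \<and> (\<forall>x y. E x y \<longrightarrow> E y x)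
      \<and> (\<forall>x. \<not> E x x) \<and> (\<forall>x y. E x y \<longrightarrow> x \<in> V \<and> y \<in> V)"

definition nbhd :: "'a set \<Rightarrow> ('a \<Rightarrow> 'a \<Rightarrow> bool) \<Rightarrow> 'a \<Rightarrow> 'a set" where
  "nbhd V E x = {y \<in> V. E x y}"

definition degree :: "'a set \<Rightarrow> ('a \<Rightarrow> 'a \<Rightarrow> bool) \<Rightarrow> 'a \<Rightarrow> nat" where
  "degree V E x = card (nbhd V E x)"

definition max_degree :: "'a set \<Rightarrow> ('a \<Rightarrow> 'a \<Rightarrow> bool) \<Rightarrow> nat" where
  "max_degree V E = Max (degree V E ` V)"

definition min_degree :: "'a set \<Rightarrow> ('a \<Rightarrow> 'a \<Rightarrow> bool) \<Rightarrow> nat" where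
  "min_degree V E = Min (degree V E ` V)"

definition is_leaf :: "'a set \<Rightarrow> ('a \<Rightarrow> 'a \<Rightarrow> bool) \<Rightarrow> 'a \<Rightarrow> bool" where
  "is_leaf V E x \<longleftrightarrow> x \<in> V \<and> degree V E x = 1"

definition no_isolated :: "'a set \<Rightarrow> ('a \<Rightarrow> 'a \<Rightarrow> bool) \<Rightarrow> bool" where
  "no_isolated V E \<longleftrightarrow> (\<forall>x\<in>V. degree V E x \<noteq> 0)"

definition total_dominating :: "'a set \<Rightarrow> ('a \<Rightarrow> 'a \<Rightarrow> bool) \<Rightarrow> 'a set \<Rightarrow> bool" where
  "total_dominating V E S \<longleftrightarrow> S \<subseteq> V \<and> (\<forall>x\<in>V. \<exists>s\<in>S. E x s)"

definition gamma_t :: "'a set \<Rightarrow> ('a \<Rightarrow> 'a \<Rightarrow> bool) \<Rightarrow> nat" where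
  "gamma_t V E = (LEAST k. \<exists>S. total_dominating V E S \<and> card S = k)"

text \<open>Vertex deletion G - v: induced subgraph on V - {v}.\<close>
definition del_vertex_rel :: "('a \<Rightarrow> 'a \<Rightarrow> bool) \<Rightarrow> 'a \<Rightarrow> 'a \<Rightarrow> 'a \<Rightarrow> bool" where
  "del_vertex_rel E v = (\<lambda>x y. E x y \<and> x \<noteq> v \<and> y \<noteq> v)"

definition gamma_t_critical :: "'a set \<Rightarrow> ('a \<Rightarrow> 'a \<Rightarrow> bool) \<Rightarrow> bool" where
  "gamma_t_critical V E \<longleftrightarrow> no_isolated V E \<and>
     (\<forall>v\<in>V. (\<forall>u. E v u \<longrightarrow> \<not> is_leaf V E u) \<longrightarrow>
        gamma_t (V - {v}) (del_vertex_rel E v) < gamma_t V E)"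

definition connected_graph :: "'a set \<Rightarrow> ('a \<Rightarrow> 'a \<Rightarrow> bool) \<Rightarrow> bool" where
  "connected_graph V E \<longleftrightarrow> (\<forall>x\<in>V. \<forall>y\<in>V. (\<lambda>a b. a \<in> V \<and> b \<in> V \<and> E a b)\<^sup>*\<^sup>* x y)"

end

theory Submission
  imports Defs
begin

theorem mainTheorem3:
  fixes V :: "'a set" and E :: "'a \<Rightarrow> 'a \<Rightarrow> bool" and n :: nat
  assumes "simple_graph V E"
    and "V \<noteq> {}"
    and "card V = n"
    and "gamma_t_critical V E"
    and "gamma_t V E = n - max_degree V E"
    and "min_degree V E \<ge> 2"
  shows "connected_graph V E"
proof (rule ccontr)
  assume nc: "\<not> connected_graph V E"
  have fin: "finite V" and sym: "\<And>x y. E x y \<Longrightarrow> E y x"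
    and irr: "\<And>x. \<not> E x x" and inV: "\<And>x y. E x y \<Longrightarrow> x \<in> V \<and> y \<in> V"
    using assms(1) unfolding simple_graph_def by blast+
  define R where "R = (\<lambda>a b. a \<in> V \<and> b \<in> V \<and> E a b)"
  have Rstep: "\<And>a b c. R\<^sup>*\<^sup>* a b \<Longrightarrow> E b c \<Longrightarrow> R\<^sup>*\<^sup>* a c"
    by (metis R_def inV rtranclp.rtrancl_into_rtrancl)
  have Rsym: "\<And>a b. R\<^sup>*\<^sup>* a b \<Longrightarrow> R\<^sup>*\<^sup>* b a"
  proof -
    fix a b assume "R\<^sup>*\<^sup>* a b"
    then show "R\<^sup>*\<^sup>* b a"
    proof (induction rule: rtranclp_induct)
      case base then show ?case by simp
    next
      case (step y z)
      then have "R z y" using sym unfolding R_def by blast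
      then show ?case using step(3) by (meson converse_rtranclp_into_rtranclp)
    qed
  qed
  have deg2: "\<And>x. x \<in> V \<Longrightarrow> degree V E x \<ge> 2"
  proof -
    fix x assume "x \<in> V"
    then have "min_degree V E \<le> degree V E x" unfolding min_degree_def
      using fin by simp
    then show "degree V E x \<ge> 2" using assms(6) by simp
  qed
  have nbfin: "\<And>x. finite (nbhd V E x)" using fin unfolding nbhd_def by simp
  have other: "\<And>x w. x \<in> V \<Longrightarrow> \<exists>s. E x s \<and> s \<noteq> w"
  proof -
    fix x w assume "x \<in> V"
    then have c: "card (nbhd V E x) \<ge> 2" using deg2 unfolding degree_def by simp
    show "\<exists>s. E x s \<and> s \<noteq> w"
    proof (rule ccontr)
      assume "\<not> (\<exists>s. E x s \<and> s \<noteq> w)"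
      then have "nbhd V E x \<subseteq> {w}" unfolding nbhd_def by auto
      then have "card (nbhd V E x) \<le> 1"
        by (metis card.empty card.insert empty_iff finite.intros(1) le_numeral_extra(4)
            subset_singletonD zero_le_one One_nat_def)
      then show False using c by simp
    qed
  qed
  obtain v where v: "v \<in> V" "degree V E v = max_degree V E"
    unfolding max_degree_def using fin assms(2)
    by (metis (mono_tags, lifting) Max_in finite_imageI image_iff image_is_empty)
  define N where "N = nbhd V E v"
  define \<Delta> where "\<Delta> = card N"
  have NV: "N \<subseteq> V" unfolding N_def nbhd_def by auto
  have vN: "v \<notin> N" unfolding N_def nbhd_def using irr by auto
  have Nreach: "\<And>a. a \<in> N \<Longrightarrow> R\<^sup>*\<^sup>* v a" unfolding N_def nbhd_def R_def
    using v(1) by auto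
  obtain d where d: "d \<in> V" "\<not> R\<^sup>*\<^sup>* v d"
  proof -
    from nc obtain x y where xy: "x \<in> V" "y \<in> V" "\<not> R\<^sup>*\<^sup>* x y"
      unfolding connected_graph_def R_def by blast
    have "\<not> R\<^sup>*\<^sup>* v x \<or> \<not> R\<^sup>*\<^sup>* v y"
      using xy(3) Rsym by (meson rtranclp_trans)
    then show ?thesis using that xy by blast
  qed
  have dN: "d \<notin> N" using Nreach d by blast
  have dv: "d \<noteq> v" using d by auto
  obtain u where u: "E v u" using other[OF v(1)] by blast
  have uN: "u \<in> N" unfolding N_def nbhd_def using u inV by auto
  define E' where "E' = del_vertex_rel E v"
  have noleaf: "\<forall>w. E v w \<longrightarrow> \<not> is_leaf V E w"
    using deg2 inV unfolding is_leaf_def by fastforce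
  have crit: "gamma_t (V - {v}) E' < gamma_t V E"
    using assms(4) v(1) noleaf unfolding gamma_t_critical_def E'_def by blast
  have td0: "total_dominating (V - {v}) E' (V - {v})"
    unfolding total_dominating_def E'_def del_vertex_rel_def
  proof (intro conjI ballI)
    fix x assume x: "x \<in> V - {v}"
    then obtain s where "E x s" "s \<noteq> v" using other by blast
    then show "\<exists>s\<in>V - {v}. E x s \<and> x \<noteq> v \<and> s \<noteq> v" using x inV by blast
  qed simp
  obtain S' where S': "total_dominating (V - {v}) E' S'" "card S' = gamma_t (V - {v}) E'"
    unfolding gamma_t_def using LeastI_ex[of "\<lambda>k. \<exists>S. total_dominating (V - {v}) E' S \<and> card S = k"] td0
    by blast
  have le: "\<And>T. total_dominating V E T \<Longrightarrow> gamma_t V E \<le> card T"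
    unfolding gamma_t_def by (metis (mono_tags, lifting) Least_le)
  have S'N: "S' \<inter> N = {}"
  proof (rule ccontr)
    assume "S' \<inter> N \<noteq> {}"
    then obtain a where a: "a \<in> S'" "a \<in> N" by blast
    have "total_dominating V E S'"
      unfolding total_dominating_def
    proof (intro conjI ballI)
      show "S' \<subseteq> V" using S'(1) unfolding total_dominating_def by blast
      fix x assume x: "x \<in> V"
      show "\<exists>s\<in>S'. E x s"
      proof (cases "x = v")
        case True then show ?thesis using a unfolding N_def nbhd_def by auto
      next
        case False
        then show ?thesis using S'(1) x unfolding total_dominating_def E'_def del_vertex_rel_def
          by blast
      qed
    qed
    then have "gamma_t V E \<le> card S'" by (rule le)
    then show False using crit S'(2) by simp
  qed
  define T where "T = (V - (N \<union> {v, d})) \<union> {u}"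
  have tdT: "total_dominating V E T"
    unfolding total_dominating_def
  proof (intro conjI ballI)
    show "T \<subseteq> V" unfolding T_def using uN NV by auto
    fix x assume x: "x \<in> V"
    show "\<exists>s\<in>T. E x s"
    proof (cases "x = v")
      case True then show ?thesis using u unfolding T_def by auto
    next
      case xv: False
      show ?thesis
      proof (cases "R\<^sup>*\<^sup>* v x")
        case True
        obtain s where s: "s \<in> S'" "E x s" "s \<noteq> v"
          using S'(1) x xv unfolding total_dominating_def E'_def del_vertex_rel_def by blast
        have "s \<notin> N" using S'N s by blast
        moreover have "s \<noteq> d" using Rstep[OF True s(2)] d by blast
        moreover have "s \<in> V" using inV s by blast
        ultimately show ?thesis using s unfolding T_def by blast
      next
        case False
        obtain s where s: "E x s" "s \<noteq> d" using other x by blast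
        have sv: "s \<noteq> v" using False s sym unfolding R_def using x v(1) by blast
        have "s \<notin> N" using Nreach Rstep[of v s x] s sym False by blast
        then show ?thesis using s sv inV unfolding T_def by blast
      qed
    qed
  qed
  have cU: "card (N \<union> {v, d}) = \<Delta> + 2"
    using vN dN dv NV fin unfolding \<Delta>_def by (simp add: finite_subset)
  have sub: "N \<union> {v, d} \<subseteq> V" using NV v d by auto
  have cD: "card (V - (N \<union> {v, d})) = n - (\<Delta> + 2)"
    using card_Diff_subset[OF finite_subset[OF sub fin] sub] cU assms(3) by simp
  have nge: "\<Delta> + 2 \<le> n" using card_mono[OF fin sub] cU assms(3) by simp
  have "card T \<le> card (V - (N \<union> {v, d})) + card {u}"
    unfolding T_def by (rule card_Un_le)
  then have "card T \<le> n - \<Delta> - 1" using cD nge by simp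
  moreover have "gamma_t V E = n - \<Delta>" using assms(5) v(2) unfolding \<Delta>_def N_def degree_def by simp
  ultimately have "gamma_t V E > card T" using nge by simp
  then show False using le[OF tdT] by simp
qed

end
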